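(* Suppose a task class requires output precision $\Delta$ from minimal embedding perturbation $r$, so that $\Lambda(W)\ge\Delta/r$. Then the LAWS routing radius $\tau^* = (\delta-\varepsilon_{\mathrm{fit}}-2\Lambda(W)C_E)/(\Lambda(W)C_E)$ satisfies \[ \tau^* \le \frac{\delta - \varepsilon_{\mathrm{fit}} - 2(\Delta/r)C_E}{(\Delta/r)C_E}. \] If $\Delta > r(\delta-\varepsilon_{\mathrm{fit}})/(2C_E)$, then $\tau^*<0$ and no expert can be certified, so LAWS must always invoke the base model for such tasks.
   Context: $\Lambda(W)>0$ is the end-to-end Lipschitz constant of the transformer base model, $C_E = \max_{t,t'}\|E(t)-E(t')\|$ the embedding diameter, $\delta>0$ the LAWS quality threshold and $\varepsilon_{\mathrm{fit}}\ge0$ the expert fitting error, with $\delta - \varepsilon_{\mathrm{fit}} \ge 0$ implicitly. An expert with negative routing radius covers no query. *)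

theory Defs
  imports "HOL-Analysis.Analysis"
begin

definition laws_tau :: "real \<Rightarrow> real \<Rightarrow> real \<Rightarrow> real \<Rightarrow> real" where
  "laws_tau \<delta> \<epsilon>fit \<Lambda> CE = (\<delta> - \<epsilon>fit - 2 * \<Lambda> * CE) / (\<Lambda> * CE)"

definition expert_covers :: "'a::metric_space \<Rightarrow> real \<Rightarrow> 'a \<Rightarrow> bool" where
  "expert_covers c \<tau> q \<longleftrightarrow> dist q c \<le> \<tau>"

end

theory Submission
  imports Defs
begin

theorem mainTheorem13:
  fixes \<Lambda> CE \<delta> \<epsilon>fit \<Delta> r :: real
  assumes "\<Lambda> > 0" and "CE > 0" and "\<delta> > 0" and "\<epsilon>fit \<ge> 0" and "\<delta> - \<epsilon>fit \<ge> 0"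
    and "\<Delta> > 0" and "r > 0"
    and "\<Lambda> \<ge> \<Delta> / r"
  shows "laws_tau \<delta> \<epsilon>fit \<Lambda> CE \<le> (\<delta> - \<epsilon>fit - 2 * (\<Delta> / r) * CE) / ((\<Delta> / r) * CE)
         \<and> (\<Delta> > r * (\<delta> - \<epsilon>fit) / (2 * CE) \<longrightarrow>
           laws_tau \<delta> \<epsilon>fit \<Lambda> CE < 0 \<and>
           (\<forall>(c::'a::metric_space) q. \<not> expert_covers c (laws_tau \<delta> \<epsilon>fit \<Lambda> CE) q))"
proof -
  define L where "L = \<Delta> / r"
  define d where "d = \<delta> - \<epsilon>fit"
  have L0: "L > 0" using assms unfolding L_def by simp
  have LL: "L \<le> \<Lambda>" using assms unfolding L_def by simp
  have d0: "d \<ge> 0" using assms unfolding d_def by simp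
  have t: "laws_tau \<delta> \<epsilon>fit \<Lambda> CE = d / (\<Lambda> * CE) - 2"
    unfolding laws_tau_def d_def using assms by (simp add: field_simps)
  have t2: "(\<delta> - \<epsilon>fit - 2 * L * CE) / (L * CE) = d / (L * CE) - 2"
    unfolding d_def using assms L0 by (simp add: field_simps)
  have m: "d / (\<Lambda> * CE) \<le> d / (L * CE)"
    by (rule divide_left_mono) (use d0 LL L0 assms in auto)
  have A: "laws_tau \<delta> \<epsilon>fit \<Lambda> CE \<le> (\<delta> - \<epsilon>fit - 2 * L * CE) / (L * CE)"
    using t t2 m by simp
  have B: "laws_tau \<delta> \<epsilon>fit \<Lambda> CE < 0" if h: "\<Delta> > r * (\<delta> - \<epsilon>fit) / (2 * CE)"
  proof -
    have "d / (2 * CE) < L" using h assms unfolding L_def d_def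
      by (simp add: field_simps)
    hence "d < 2 * CE * L" using assms by (simp add: field_simps)
    also have "\<dots> \<le> 2 * CE * \<Lambda>" using LL assms by simp
    finally have "d < 2 * (\<Lambda> * CE)" by (simp add: mult_ac)
    hence "d / (\<Lambda> * CE) < 2" using assms by (simp add: field_simps)
    thus ?thesis using t by simp
  qed
  show ?thesis
    using A B unfolding L_def expert_covers_def
    by (smt (verit) zero_le_dist)
qed

end
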